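(* Let $\mathcal{H}$ be an indexed preorder with existential quantification, and let $\mathcal{A}\subseteq\mathcal{H}$ be an indexed sub-preorder such that (1) every predicate in $\mathcal{A}$ is $\exists$-prime in $\mathcal{H}$, and (2) for every set $I$ and predicate $\varphi\in\mathcal{H}(I)$ there exist a function $u:J\to I$ and $\pi\in\mathcal{A}(J)$ with $\varphi\cong\exists_u\pi$. Then the inclusion $\mathcal{A}\hookrightarrow\mathcal{H}$ is an $\exists$-completion, and moreover $\mathcal{A}\hookrightarrow\mathsf{prim}(\mathcal{H})$ is an equivalence, i.e. every $\exists$-prime predicate of $\mathcal{H}$ is isomorphic to one in $\mathcal{A}$. In particular, if $\mathcal{H}$ has enough $\exists$-prime predicates, then $\mathsf{prim}(\mathcal{H})\hookrightarrow\mathcal{H}$ is an $\exists$-completion.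
   Context: An indexed preorder is a pseudofunctor $\mathcal{H}:\mathsf{Set}^{op}\to\mathsf{Ord}$; elements of $\mathcal{H}(I)$ are predicates on $I$, and $u^*=\mathcal{H}(u)$ for $u:J\to I$. $\mathsf{IOrd}$ denotes the locally ordered category of indexed preorders and pseudonatural transformations (indexed monotone maps), ordered componentwise. $\mathcal{H}$ has existential quantification if every $u^*:\mathcal{H}(I)\to\mathcal{H}(J)$ has a left adjoint $\exists_u$ and the Beck–Chevalley condition holds: for every pullback square in $\mathsf{Set}$ with $\bar u:L\to K$, $\bar v:L\to J$, $u:J\to I$, $v:K\to I$, one has $u^*\circ\exists_v\cong\exists_{\bar v}\circ\bar u^*$. An indexed monotone map $f:\mathcal{H}\to\mathcal{K}$ commutes with existential quantification if $f_I\circ\exists_u\cong\exists_u\circ f_J$ for all $u:J\to I$; $\exists\text{-}\mathsf{IOrd}$ is the sub-2-category of indexed preorders with existential quantification and such maps. An indexed monotone map $f:\mathcal{A}\to\mathcal{H}$ into an indexed preorder with existential quantification is an $\exists$-completion if for every $\mathcal{K}$ with existential quantification, precomposition $\exists\text{-}\mathsf{IOrd}(\mathcal{H},\mathcal{K})\to\mathsf{IOrd}(\mathcal{A},\mathcal{K})$ is an equivalence of preorders. For $\mathcal{H}$ with existential quantification, $\pi\in\mathcal{H}(I)$ is $\exists$-prime if for all functions $I\xleftarrow{u}J\xleftarrow{v}K$ and $\varphi\in\mathcal{H}(K)$ with $u^*\pi\le\exists_v\varphi$ there is $s:J\to K$ with $v\circ s=\mathrm{id}_J$ and $u^*\pi\le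 s^*\varphi$. $\mathsf{prim}(\mathcal{H})$ is the indexed sub-preorder of $\exists$-prime predicates, and $\mathcal{H}$ has enough $\exists$-prime predicates if every $\varphi\in\mathcal{H}(I)$ is isomorphic to $\exists_u\pi$ for some $u:J\to I$ and $\exists$-prime $\pi\in\mathcal{H}(J)$. *)

theory Defs
  imports "HOL-Library.FuncSet"
begin

text \<open>Model of Set: subsets of a fixed universe type 'u; a function J \<rightarrow> I is an
  extensional function in J -> I (extensional).  An indexed preorder H assigns to each
  I a carrier of predicates (ip_car H I), a preorder (ip_le H I), and to each
  u : J \<rightarrow> I the reindexing u^* = ip_rx H u J I : H(I) \<rightarrow> H(J).\<close>

record ('u, 'p) ipre =
  ip_car :: "'u set \<Rightarrow> 'p set"
  ip_le  :: "'u set \<Rightarrow> 'p \<Rightarrow> 'p \<Rightarrow> bool"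
  ip_rx  :: "('u \<Rightarrow> 'u) \<Rightarrow> 'u set \<Rightarrow> 'u set \<Rightarrow> 'p \<Rightarrow> 'p"

definition ip_iso :: "('u, 'p) ipre \<Rightarrow> 'u set \<Rightarrow> 'p \<Rightarrow> 'p \<Rightarrow> bool" where
  "ip_iso H I x y \<longleftrightarrow> ip_le H I x y \<and> ip_le H I y x"

definition indexed_preorder :: "('u, 'p) ipre \<Rightarrow> bool" where
  "indexed_preorder H \<longleftrightarrow>
     (\<forall>I. \<forall>x\<in>ip_car H I. ip_le H I x x) \<and>
     (\<forall>I. \<forall>x\<in>ip_car H I. \<forall>y\<in>ip_car H I. \<forall>z\<in>ip_car H I.
         ip_le H I x y \<longrightarrow> ip_le H I y z \<longrightarrow> ip_le H I x z) \<and>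
     (\<forall>I J u. u \<in> J \<rightarrow>\<^sub>E I \<longrightarrow> (\<forall>x\<in>ip_car H I. ip_rx H u J I x \<in> ip_car H J)) \<and>
     (\<forall>I J u. u \<in> J \<rightarrow>\<^sub>E I \<longrightarrow> (\<forall>x\<in>ip_car H I. \<forall>y\<in>ip_car H I.
         ip_le H I x y \<longrightarrow> ip_le H J (ip_rx H u J I x) (ip_rx H u J I y))) \<and>
     (\<forall>I. \<forall>x\<in>ip_car H I. ip_iso H I (ip_rx H (\<lambda>i\<in>I. i) I I x) x) \<and>
     (\<forall>I J K u v. u \<in> J \<rightarrow>\<^sub>E I \<longrightarrow> v \<in> K \<rightarrow>\<^sub>E J \<longrightarrow>
         (\<forall>x\<in>ip_car H I. ip_iso H K (ip_rx H (compose K u v) K I x)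
                                       (ip_rx H v K J (ip_rx H u J I x))))"

definition is_pullback ::
  "'u set \<Rightarrow> 'u set \<Rightarrow> 'u set \<Rightarrow> 'u set \<Rightarrow> ('u \<Rightarrow> 'u) \<Rightarrow> ('u \<Rightarrow> 'u) \<Rightarrow> ('u \<Rightarrow> 'u) \<Rightarrow> ('u \<Rightarrow> 'u) \<Rightarrow> bool"
  where
  "is_pullback I J K L u v ub vb \<longleftrightarrow>
     u \<in> J \<rightarrow>\<^sub>E I \<and> v \<in> K \<rightarrow>\<^sub>E I \<and> ub \<in> L \<rightarrow>\<^sub>E K \<and> vb \<in> L \<rightarrow>\<^sub>E J \<and>
     bij_betw (\<lambda>l. (vb l, ub l)) L {(j, k). j \<in> J \<and> k \<in> K \<and> u j = v k}"

definition has_exists ::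
  "('u, 'p) ipre \<Rightarrow> (('u \<Rightarrow> 'u) \<Rightarrow> 'u set \<Rightarrow> 'u set \<Rightarrow> 'p \<Rightarrow> 'p) \<Rightarrow> bool" where
  "has_exists H ex \<longleftrightarrow>
     (\<forall>I J u. u \<in> J \<rightarrow>\<^sub>E I \<longrightarrow> (\<forall>x\<in>ip_car H J. ex u J I x \<in> ip_car H I \<and>
        (\<forall>y\<in>ip_car H I. ip_le H I (ex u J I x) y \<longleftrightarrow> ip_le H J x (ip_rx H u J I y)))) \<and>
     (\<forall>I J K L u v ub vb. is_pullback I J K L u v ub vb \<longrightarrow>
        (\<forall>x\<in>ip_car H K. ip_iso H J (ip_rx H u J I (ex v K I x)) (ex vb L J (ip_rx H ub L K x))))"

definition ihom :: "('u, 'p) ipre \<Rightarrow> ('u, 'q) ipre \<Rightarrow> ('u set \<Rightarrow> 'p \<Rightarrow> 'q) \<Rightarrow> bool" where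
  "ihom H K f \<longleftrightarrow>
     (\<forall>I. \<forall>x\<in>ip_car H I. f I x \<in> ip_car K I) \<and>
     (\<forall>I. \<forall>x\<in>ip_car H I. \<forall>y\<in>ip_car H I. ip_le H I x y \<longrightarrow> ip_le K I (f I x) (f I y)) \<and>
     (\<forall>I J u. u \<in> J \<rightarrow>\<^sub>E I \<longrightarrow> (\<forall>x\<in>ip_car H I.
         ip_iso K J (f J (ip_rx H u J I x)) (ip_rx K u J I (f I x))))"

definition ex_hom ::
  "('u, 'p) ipre \<Rightarrow> (('u \<Rightarrow> 'u) \<Rightarrow> 'u set \<Rightarrow> 'u set \<Rightarrow> 'p \<Rightarrow> 'p) \<Rightarrow>
   ('u, 'q) ipre \<Rightarrow> (('u \<Rightarrow> 'u) \<Rightarrow> 'u set \<Rightarrow> 'u set \<Rightarrow> 'q \<Rightarrow> 'q) \<Rightarrow>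
   ('u set \<Rightarrow> 'p \<Rightarrow> 'q) \<Rightarrow> bool" where
  "ex_hom H exH K exK f \<longleftrightarrow> ihom H K f \<and>
     (\<forall>I J u. u \<in> J \<rightarrow>\<^sub>E I \<longrightarrow> (\<forall>x\<in>ip_car H J.
         ip_iso K I (f I (exH u J I x)) (exK u J I (f J x))))"

definition hom_le :: "('u, 'p) ipre \<Rightarrow> ('u, 'q) ipre \<Rightarrow> ('u set \<Rightarrow> 'p \<Rightarrow> 'q) \<Rightarrow> ('u set \<Rightarrow> 'p \<Rightarrow> 'q) \<Rightarrow> bool" where
  "hom_le H K f g \<longleftrightarrow> (\<forall>I. \<forall>x\<in>ip_car H I. ip_le K I (f I x) (g I x))"

definition preorder_equiv ::
  "'a set \<Rightarrow> ('a \<Rightarrow> 'a \<Rightarrow> bool) \<Rightarrow> 'b set \<Rightarrow> ('b \<Rightarrow> 'b \<Rightarrow> bool) \<Rightarrow> ('a \<Rightarrow> 'b) \<Rightarrow> bool" where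
  "preorder_equiv X leX Y leY F \<longleftrightarrow>
     (\<forall>x\<in>X. F x \<in> Y) \<and> (\<forall>x\<in>X. \<forall>x'\<in>X. leX x x' \<longrightarrow> leY (F x) (F x')) \<and>
     (\<exists>G. (\<forall>y\<in>Y. G y \<in> X) \<and> (\<forall>y\<in>Y. \<forall>y'\<in>Y. leY y y' \<longrightarrow> leX (G y) (G y')) \<and>
          (\<forall>x\<in>X. leX (G (F x)) x \<and> leX x (G (F x))) \<and>
          (\<forall>y\<in>Y. leY (F (G y)) y \<and> leY y (F (G y))))"

definition sub_preorder :: "('u, 'p) ipre \<Rightarrow> ('u set \<Rightarrow> 'p set) \<Rightarrow> bool" where
  "sub_preorder H A \<longleftrightarrow> (\<forall>I. A I \<subseteq> ip_car H I) \<and>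
     (\<forall>I J u. u \<in> J \<rightarrow>\<^sub>E I \<longrightarrow> (\<forall>x\<in>A I. ip_rx H u J I x \<in> A J))"

text \<open>The inclusion A \<hookrightarrow> H is an \<exists>-completion with respect to the target K:
  precomposition with the inclusion, \<exists>-IOrd(H,K) \<rightarrow> IOrd(A,K), is an equivalence.\<close>
definition ex_completion_wrt ::
  "('u, 'p) ipre \<Rightarrow> (('u \<Rightarrow> 'u) \<Rightarrow> 'u set \<Rightarrow> 'u set \<Rightarrow> 'p \<Rightarrow> 'p) \<Rightarrow> ('u set \<Rightarrow> 'p set) \<Rightarrow>
   ('u, 'q) ipre \<Rightarrow> (('u \<Rightarrow> 'u) \<Rightarrow> 'u set \<Rightarrow> 'u set \<Rightarrow> 'q \<Rightarrow> 'q) \<Rightarrow> bool" where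
  "ex_completion_wrt H exH A K exK \<longleftrightarrow>
     preorder_equiv {g. ex_hom H exH K exK g} (hom_le H K)
                    {f. ihom (H\<lparr>ip_car := A\<rparr>) K f} (hom_le (H\<lparr>ip_car := A\<rparr>) K) (\<lambda>g. g)"

definition ex_prime ::
  "('u, 'p) ipre \<Rightarrow> (('u \<Rightarrow> 'u) \<Rightarrow> 'u set \<Rightarrow> 'u set \<Rightarrow> 'p \<Rightarrow> 'p) \<Rightarrow> 'u set \<Rightarrow> 'p \<Rightarrow> bool" where
  "ex_prime H ex I p \<longleftrightarrow> p \<in> ip_car H I \<and>
     (\<forall>J K u v x. u \<in> J \<rightarrow>\<^sub>E I \<longrightarrow> v \<in> K \<rightarrow>\<^sub>E J \<longrightarrow> x \<in> ip_car H K \<longrightarrow>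
        ip_le H J (ip_rx H u J I p) (ex v K J x) \<longrightarrow>
        (\<exists>s \<in> J \<rightarrow>\<^sub>E K. (\<forall>j\<in>J. v (s j) = j) \<and> ip_le H J (ip_rx H u J I p) (ip_rx H s J K x)))"

definition prim :: "('u, 'p) ipre \<Rightarrow> (('u \<Rightarrow> 'u) \<Rightarrow> 'u set \<Rightarrow> 'u set \<Rightarrow> 'p \<Rightarrow> 'p) \<Rightarrow> 'u set \<Rightarrow> 'p set" where
  "prim H ex I = {p. ex_prime H ex I p}"

definition enough_primes :: "('u, 'p) ipre \<Rightarrow> (('u \<Rightarrow> 'u) \<Rightarrow> 'u set \<Rightarrow> 'u set \<Rightarrow> 'p \<Rightarrow> 'p) \<Rightarrow> bool" where
  "enough_primes H ex \<longleftrightarrow> (\<forall>I. \<forall>x\<in>ip_car H I. \<exists>J u p.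
      u \<in> J \<rightarrow>\<^sub>E I \<and> ex_prime H ex J p \<and> ip_iso H I x (ex u J I p))"

end

theory Submission imports Defs begin

lemma inj_pair_exists: "infinite (UNIV::'u set) \<Longrightarrow> \<exists>e::('u\<times>'u\<Rightarrow>'u). inj e"
proof -
  assume a: "infinite (UNIV::'u set)"
  have "(card_of ((UNIV::'u set) \<times> (UNIV::'u set)), card_of (UNIV::'u set)) \<in> ordIso"
    by (rule card_of_Times_same_infinite[OF a])
  hence "(card_of ((UNIV::'u set) \<times> (UNIV::'u set)), card_of (UNIV::'u set)) \<in> ordLeq"
    by (rule ordIso_imp_ordLeq)
  hence "\<exists>f :: 'u\<times>'u\<Rightarrow>'u. inj_on f ((UNIV::'u set) \<times> (UNIV::'u set)) \<and> f ` ((UNIV::'u set) \<times> (UNIV::'u set)) \<subseteq> UNIV"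
    by (rule card_of_ordLeq[THEN iffD2])
  then obtain f :: "'u\<times>'u\<Rightarrow>'u" where "inj_on f ((UNIV::'u set) \<times> (UNIV::'u set))" by blast
  then have "inj f" by (simp only: UNIV_Times_UNIV)
  thus ?thesis by blast
qed

lemma pullback_exists_e:
  assumes e: "inj (e::'u\<times>'u\<Rightarrow>'u)" and u: "u \<in> J \<rightarrow>\<^sub>E I" and v: "v \<in> K \<rightarrow>\<^sub>E I"
  shows "\<exists>(L::'u set) ub vb. is_pullback I J K L u v ub vb"
proof -
  define P where "P = {(j, k). j \<in> J \<and> k \<in> K \<and> u j = v k}"
  define L where "L = e ` P"
  define vb where "vb = (\<lambda>l\<in>L. fst (inv_into P e l))"
  define ub where "ub = (\<lambda>l\<in>L. snd (inv_into P e l))"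
  have b1: "bij_betw e P L" unfolding L_def
    by (rule inj_on_imp_bij_betw[OF inj_on_subset[OF e subset_UNIV]])
  hence b2: "bij_betw (inv_into P e) L P" by (rule bij_betw_inv_into)
  have inP: "\<And>l. l \<in> L \<Longrightarrow> inv_into P e l \<in> P" using b2 bij_betwE by blast
  have eq: "\<And>l. l \<in> L \<Longrightarrow> inv_into P e l = (vb l, ub l)"
    unfolding vb_def ub_def by simp
  have "bij_betw (\<lambda>l. (vb l, ub l)) L P"
    using b2 bij_betw_cong[of L "inv_into P e" "\<lambda>l. (vb l, ub l)" P] eq by blast
  moreover have "ub \<in> L \<rightarrow>\<^sub>E K"
  proof
    fix l assume "l \<in> L" then have "inv_into P e l \<in> P" by (rule inP)
    obtain a b where ab: "inv_into P e l = (a, b)" by (cases "inv_into P e l") blast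
    with \<open>inv_into P e l \<in> P\<close> have "a \<in> J" "b \<in> K" unfolding P_def by auto
    then show "ub l \<in> K" using \<open>l \<in> L\<close> ab unfolding ub_def by simp
  next
    fix l assume "l \<notin> L" then show "ub l = undefined" unfolding ub_def by simp
  qed
  moreover have "vb \<in> L \<rightarrow>\<^sub>E J"
  proof
    fix l assume "l \<in> L" then have "inv_into P e l \<in> P" by (rule inP)
    obtain a b where ab: "inv_into P e l = (a, b)" by (cases "inv_into P e l") blast
    with \<open>inv_into P e l \<in> P\<close> have "a \<in> J" "b \<in> K" unfolding P_def by auto
    then show "vb l \<in> J" using \<open>l \<in> L\<close> ab unfolding vb_def by simp
  next
    fix l assume "l \<notin> L" then show "vb l = undefined" unfolding vb_def by simp
  qed
  ultimately show ?thesis unfolding is_pullback_def P_def using u v by blast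
qed

lemma pullback_exists:
  assumes inf: "infinite (UNIV::'u set)" and u: "u \<in> J \<rightarrow>\<^sub>E I" and v: "v \<in> K \<rightarrow>\<^sub>E I"
  shows "\<exists>(L::'u set) ub vb. is_pullback I J K L u v ub vb"
proof -
  obtain e :: "'u\<times>'u\<Rightarrow>'u" where e: "inj e" using inj_pair_exists[OF inf] by blast
  show ?thesis by (rule pullback_exists_e[OF e u v])
qed

lemma ex_primeD:
  assumes "ex_prime H ex I p" "u \<in> J \<rightarrow>\<^sub>E I" "v \<in> K \<rightarrow>\<^sub>E J" "x \<in> ip_car H K"
    "ip_le H J (ip_rx H u J I p) (ex v K J x)"
  shows "\<exists>s \<in> J \<rightarrow>\<^sub>E K. (\<forall>j\<in>J. v (s j) = j) \<and> ip_le H J (ip_rx H u J I p) (ip_rx H s J K x)"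
  by (rule assms(1)[unfolded ex_prime_def, THEN conjunct2, rule_format, OF assms(2-5)])

lemma ex_prime_car: "ex_prime H ex I p \<Longrightarrow> p \<in> ip_car H I"
  unfolding ex_prime_def by (rule conjunct1)

lemma ihom_car: assumes "ihom H K f" "x \<in> ip_car H I" shows "f I x \<in> ip_car K I"
  by (rule assms(1)[unfolded ihom_def, THEN conjunct1, rule_format, OF assms(2)])
lemma ihom_mono: assumes "ihom H K f" "x \<in> ip_car H I" "y \<in> ip_car H I" "ip_le H I x y"
  shows "ip_le K I (f I x) (f I y)"
  by (rule assms(1)[unfolded ihom_def, THEN conjunct2, THEN conjunct1, rule_format, OF assms(2-4)])
lemma ihom_nat: assumes "ihom H K f" "u \<in> J \<rightarrow>\<^sub>E I" "x \<in> ip_car H I"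
  shows "ip_iso K J (f J (ip_rx H u J I x)) (ip_rx K u J I (f I x))"
  by (rule assms(1)[unfolded ihom_def, THEN conjunct2, THEN conjunct2, rule_format, OF assms(2-3)])
lemma ex_hom_ihom: "ex_hom H exH K exK f \<Longrightarrow> ihom H K f"
  unfolding ex_hom_def by (rule conjunct1)
lemma ex_hom_ex: assumes "ex_hom H exH K exK f" "u \<in> J \<rightarrow>\<^sub>E I" "x \<in> ip_car H J"
  shows "ip_iso K I (f I (exH u J I x)) (exK u J I (f J x))"
  by (rule assms(1)[unfolded ex_hom_def, THEN conjunct2, rule_format, OF assms(2-3)])

locale ipx =
  fixes H :: "('u, 'p) ipre" and ex :: "('u \<Rightarrow> 'u) \<Rightarrow> 'u set \<Rightarrow> 'u set \<Rightarrow> 'p \<Rightarrow> 'p"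
  assumes ip: "indexed_preorder H" and hex: "has_exists H ex"
begin

lemma refl: "x \<in> ip_car H I \<Longrightarrow> ip_le H I x x"
  using ip[unfolded indexed_preorder_def, THEN conjunct1] by blast
lemma trans: "x \<in> ip_car H I \<Longrightarrow> y \<in> ip_car H I \<Longrightarrow> z \<in> ip_car H I \<Longrightarrow>
   ip_le H I x y \<Longrightarrow> ip_le H I y z \<Longrightarrow> ip_le H I x z"
  using ip[unfolded indexed_preorder_def, THEN conjunct2[THEN conjunct1]] by blast
lemma rx_car: "u \<in> J \<rightarrow>\<^sub>E I \<Longrightarrow> x \<in> ip_car H I \<Longrightarrow> ip_rx H u J I x \<in> ip_car H J"
  using ip[unfolded indexed_preorder_def, THEN conjunct2[THEN conjunct2, THEN conjunct1]] by blast
lemma rx_mono: "u \<in> J \<rightarrow>\<^sub>E I \<Longrightarrow> x \<in> ip_car H I \<Longrightarrow> y \<in> ip_car H I \<Longrightarrow> ip_le H I x y \<Longrightarrow>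
   ip_le H J (ip_rx H u J I x) (ip_rx H u J I y)"
  using ip[unfolded indexed_preorder_def, THEN conjunct2[THEN conjunct2, THEN conjunct2, THEN conjunct1]] by blast
lemma rx_id: "x \<in> ip_car H I \<Longrightarrow> ip_iso H I (ip_rx H (\<lambda>i\<in>I. i) I I x) x"
  using ip[unfolded indexed_preorder_def, THEN conjunct2[THEN conjunct2, THEN conjunct2, THEN conjunct2, THEN conjunct1]] by blast
lemma rx_comp: "u \<in> J \<rightarrow>\<^sub>E I \<Longrightarrow> v \<in> K \<rightarrow>\<^sub>E J \<Longrightarrow> x \<in> ip_car H I \<Longrightarrow>
   ip_iso H K (ip_rx H (compose K u v) K I x) (ip_rx H v K J (ip_rx H u J I x))"
  using ip[unfolded indexed_preorder_def, THEN conjunct2[THEN conjunct2, THEN conjunct2, THEN conjunct2, THEN conjunct2]] by blast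
lemma ex_car: "u \<in> J \<rightarrow>\<^sub>E I \<Longrightarrow> x \<in> ip_car H J \<Longrightarrow> ex u J I x \<in> ip_car H I"
  using hex[unfolded has_exists_def, THEN conjunct1] by blast
lemma adj: "u \<in> J \<rightarrow>\<^sub>E I \<Longrightarrow> x \<in> ip_car H J \<Longrightarrow> y \<in> ip_car H I \<Longrightarrow>
   ip_le H I (ex u J I x) y \<longleftrightarrow> ip_le H J x (ip_rx H u J I y)"
  using hex[unfolded has_exists_def, THEN conjunct1] by blast
lemma BC: "is_pullback I J K L u v ub vb \<Longrightarrow> x \<in> ip_car H K \<Longrightarrow>
   ip_iso H J (ip_rx H u J I (ex v K I x)) (ex vb L J (ip_rx H ub L K x))"
  using hex[unfolded has_exists_def, THEN conjunct2] by blast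

lemma le_iso_r: "a \<in> ip_car H I \<Longrightarrow> b \<in> ip_car H I \<Longrightarrow> c \<in> ip_car H I \<Longrightarrow>
   ip_iso H I b c \<Longrightarrow> ip_le H I a b \<longleftrightarrow> ip_le H I a c"
  unfolding ip_iso_def by (meson trans)
lemma le_iso_l: "a \<in> ip_car H I \<Longrightarrow> b \<in> ip_car H I \<Longrightarrow> c \<in> ip_car H I \<Longrightarrow>
   ip_iso H I a b \<Longrightarrow> ip_le H I a c \<longleftrightarrow> ip_le H I b c"
  unfolding ip_iso_def by (meson trans)
lemma iso_le1: "ip_iso H I x y \<Longrightarrow> ip_le H I x y" by (simp add: ip_iso_def)
lemma iso_le2: "ip_iso H I x y \<Longrightarrow> ip_le H I y x" by (simp add: ip_iso_def)
lemma iso_sym: "ip_iso H I x y \<Longrightarrow> ip_iso H I y x" by (simp add: ip_iso_def)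
lemma iso_refl: "x \<in> ip_car H I \<Longrightarrow> ip_iso H I x x" by (simp add: ip_iso_def refl)
lemma iso_trans: "x \<in> ip_car H I \<Longrightarrow> y \<in> ip_car H I \<Longrightarrow> z \<in> ip_car H I \<Longrightarrow>
   ip_iso H I x y \<Longrightarrow> ip_iso H I y z \<Longrightarrow> ip_iso H I x z"
  unfolding ip_iso_def using trans by blast

lemma unit: "u \<in> J \<rightarrow>\<^sub>E I \<Longrightarrow> x \<in> ip_car H J \<Longrightarrow> ip_le H J x (ip_rx H u J I (ex u J I x))"
  using adj[of u J I x "ex u J I x"] refl ex_car by blast
lemma ex_mono: "u \<in> J \<rightarrow>\<^sub>E I \<Longrightarrow> x \<in> ip_car H J \<Longrightarrow> y \<in> ip_car H J \<Longrightarrow> ip_le H J x y \<Longrightarrow>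
   ip_le H I (ex u J I x) (ex u J I y)"
  using adj[of u J I x "ex u J I y"] unit[of u J I y] ex_car rx_car trans by metis
lemma ex_iso: "u \<in> J \<rightarrow>\<^sub>E I \<Longrightarrow> x \<in> ip_car H J \<Longrightarrow> y \<in> ip_car H J \<Longrightarrow> ip_iso H J x y \<Longrightarrow>
   ip_iso H I (ex u J I x) (ex u J I y)"
  unfolding ip_iso_def using ex_mono by blast
lemma rx_iso: "u \<in> J \<rightarrow>\<^sub>E I \<Longrightarrow> x \<in> ip_car H I \<Longrightarrow> y \<in> ip_car H I \<Longrightarrow> ip_iso H I x y \<Longrightarrow>
   ip_iso H J (ip_rx H u J I x) (ip_rx H u J I y)"
  unfolding ip_iso_def using rx_mono by blast

lemma yoneda: "a \<in> ip_car H I \<Longrightarrow> b \<in> ip_car H I \<Longrightarrow>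
   (\<And>y. y \<in> ip_car H I \<Longrightarrow> ip_le H I a y \<longleftrightarrow> ip_le H I b y) \<Longrightarrow> ip_iso H I a b"
  unfolding ip_iso_def using refl by blast

lemma ex_comp:
  assumes u: "u \<in> J \<rightarrow>\<^sub>E I" and w: "w \<in> K \<rightarrow>\<^sub>E J" and x: "x \<in> ip_car H K"
  shows "ip_iso H I (ex (compose K u w) K I x) (ex u J I (ex w K J x))"
proof (rule yoneda)
  have uw: "compose K u w \<in> K \<rightarrow>\<^sub>E I" using u w by (auto simp: compose_def)
  show "ex (compose K u w) K I x \<in> ip_car H I" by (rule ex_car[OF uw x])
  show "ex u J I (ex w K J x) \<in> ip_car H I" by (rule ex_car[OF u ex_car[OF w x]])
  fix y assume y: "y \<in> ip_car H I"
  have c1: "ip_rx H (compose K u w) K I y \<in> ip_car H K" by (rule rx_car[OF uw y])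
  have c2: "ip_rx H w K J (ip_rx H u J I y) \<in> ip_car H K" by (rule rx_car[OF w rx_car[OF u y]])
  have "ip_le H I (ex (compose K u w) K I x) y \<longleftrightarrow> ip_le H K x (ip_rx H (compose K u w) K I y)"
    by (rule adj[OF uw x y])
  also have "\<dots> \<longleftrightarrow> ip_le H K x (ip_rx H w K J (ip_rx H u J I y))"
    by (rule le_iso_r[OF x c1 c2 rx_comp[OF u w y]])
  also have "\<dots> \<longleftrightarrow> ip_le H J (ex w K J x) (ip_rx H u J I y)"
    by (rule adj[OF w x rx_car[OF u y], symmetric])
  also have "\<dots> \<longleftrightarrow> ip_le H I (ex u J I (ex w K J x)) y"
    by (rule adj[OF u ex_car[OF w x] y, symmetric])
  finally show "ip_le H I (ex (compose K u w) K I x) y \<longleftrightarrow> ip_le H I (ex u J I (ex w K J x)) y" .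
qed

lemma id_ext: "(\<lambda>i\<in>I. i) \<in> I \<rightarrow>\<^sub>E I" by auto

lemma ex_id:
  assumes x: "x \<in> ip_car H I"
  shows "ip_iso H I (ex (\<lambda>i\<in>I. i) I I x) x"
proof (rule yoneda)
  show "ex (\<lambda>i\<in>I. i) I I x \<in> ip_car H I" by (rule ex_car[OF id_ext x])
  show "x \<in> ip_car H I" by fact
  fix y assume y: "y \<in> ip_car H I"
  have "ip_le H I (ex (\<lambda>i\<in>I. i) I I x) y \<longleftrightarrow> ip_le H I x (ip_rx H (\<lambda>i\<in>I. i) I I y)"
    using adj[OF id_ext x y] .
  also have "\<dots> \<longleftrightarrow> ip_le H I x y"
    by (rule le_iso_r[OF x rx_car[OF id_ext y] y rx_id[OF y]])
  finally show "ip_le H I (ex (\<lambda>i\<in>I. i) I I x) y \<longleftrightarrow> ip_le H I x y" .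
qed

end

locale comp = H: ipx H exH + K: ipx K exK
  for H :: "('u, 'p) ipre" and exH :: "('u \<Rightarrow> 'u) \<Rightarrow> 'u set \<Rightarrow> 'u set \<Rightarrow> 'p \<Rightarrow> 'p"
  and K :: "('u, 'q) ipre" and exK :: "('u \<Rightarrow> 'u) \<Rightarrow> 'u set \<Rightarrow> 'u set \<Rightarrow> 'q \<Rightarrow> 'q" +
  fixes A :: "'u set \<Rightarrow> 'p set"
  assumes inf: "infinite (UNIV::'u set)" and sub: "sub_preorder H A"
  and pr: "\<And>I. A I \<subseteq> prim H exH I"
  and cov: "\<And>I x. x \<in> ip_car H I \<Longrightarrow> \<exists>J u p. u \<in> J \<rightarrow>\<^sub>E I \<and> p \<in> A J \<and> ip_iso H I x (exH u J I p)"
begin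

lemma A_car: "p \<in> A I \<Longrightarrow> p \<in> ip_car H I" using sub unfolding sub_preorder_def by blast
lemma A_rx: "u \<in> J \<rightarrow>\<^sub>E I \<Longrightarrow> p \<in> A I \<Longrightarrow> ip_rx H u J I p \<in> A J"
  using sub unfolding sub_preorder_def by blast
lemma A_prime: "p \<in> A I \<Longrightarrow> ex_prime H exH I p" using pr unfolding prim_def by blast

lemma ihomA: "ihom (H\<lparr>ip_car := A\<rparr>) K f \<longleftrightarrow>
     (\<forall>I. \<forall>x\<in>A I. f I x \<in> ip_car K I) \<and>
     (\<forall>I. \<forall>x\<in>A I. \<forall>y\<in>A I. ip_le H I x y \<longrightarrow> ip_le K I (f I x) (f I y)) \<and>
     (\<forall>I J u. u \<in> J \<rightarrow>\<^sub>E I \<longrightarrow> (\<forall>x\<in>A I.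
         ip_iso K J (f J (ip_rx H u J I x)) (ip_rx K u J I (f I x))))"
  unfolding ihom_def by simp


lemma fA_car: assumes "ihom (H\<lparr>ip_car := A\<rparr>) K f" "x \<in> A I" shows "f I x \<in> ip_car K I"
  using ihom_car[OF assms(1), of x I] assms(2) by simp
lemma fA_mono: assumes "ihom (H\<lparr>ip_car := A\<rparr>) K f" "x \<in> A I" "y \<in> A I" "ip_le H I x y"
  shows "ip_le K I (f I x) (f I y)"
  using ihom_mono[OF assms(1), of x I y] assms(2-4) by simp
lemma fA_nat: assumes "ihom (H\<lparr>ip_car := A\<rparr>) K f" "u \<in> J \<rightarrow>\<^sub>E I" "x \<in> A I"
  shows "ip_iso K J (f J (ip_rx H u J I x)) (ip_rx K u J I (f I x))"
  using ihom_nat[OF assms(1-2), of x] assms(3) by simp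

lemma KL:
  assumes f: "ihom (H\<lparr>ip_car := A\<rparr>) K f" and u: "u \<in> J \<rightarrow>\<^sub>E I" and p: "p \<in> A J"
    and u': "u' \<in> J' \<rightarrow>\<^sub>E I" and p': "p' \<in> A J'"
    and le: "ip_le H I (exH u J I p) (exH u' J' I p')"
  shows "ip_le K I (exK u J I (f J p)) (exK u' J' I (f J' p'))"
proof -
  note fA = f[unfolded ihomA]
  obtain L ub vb where pb: "is_pullback I J J' L u u' ub vb" using pullback_exists[OF inf u u'] by blast
  have ub: "ub \<in> L \<rightarrow>\<^sub>E J'" and vb: "vb \<in> L \<rightarrow>\<^sub>E J" using pb unfolding is_pullback_def by auto
  have pbeq: "\<And>l. l \<in> L \<Longrightarrow> u (vb l) = u' (ub l)"
    using pb unfolding is_pullback_def bij_betw_def by auto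
  have pc: "p \<in> ip_car H J" and p'c: "p' \<in> ip_car H J'" using p p' A_car by auto
  have e'c: "exH u' J' I p' \<in> ip_car H I" by (rule H.ex_car[OF u' p'c])
  have rec: "ip_rx H u J I (exH u' J' I p') \<in> ip_car H J" by (rule H.rx_car[OF u e'c])
  have ubp: "ip_rx H ub L J' p' \<in> ip_car H L" by (rule H.rx_car[OF ub p'c])
  have exc: "exH vb L J (ip_rx H ub L J' p') \<in> ip_car H J" by (rule H.ex_car[OF vb ubp])
  have idc: "ip_rx H (\<lambda>i\<in>J. i) J J p \<in> ip_car H J" using H.rx_car[OF H.id_ext pc] .
  have 1: "ip_le H J p (ip_rx H u J I (exH u' J' I p'))" using H.adj[OF u pc e'c] le by blast
  have 2: "ip_le H J p (exH vb L J (ip_rx H ub L J' p'))"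
    using H.trans[OF pc rec exc 1 H.iso_le1[OF H.BC[OF pb p'c]]] .
  have 3: "ip_le H J (ip_rx H (\<lambda>i\<in>J. i) J J p) (exH vb L J (ip_rx H ub L J' p'))"
    using H.trans[OF idc pc exc H.iso_le1[OF H.rx_id[OF pc]] 2] .
  obtain s where s: "s \<in> J \<rightarrow>\<^sub>E L" "\<forall>j\<in>J. vb (s j) = j"
    and 4: "ip_le H J (ip_rx H (\<lambda>i\<in>J. i) J J p) (ip_rx H s J L (ip_rx H ub L J' p'))"
    using ex_primeD[where H=H and ex=exH and I=J and p=p and u="\<lambda>i\<in>J. i" and J=J and v=vb and K=L
      and x="ip_rx H ub L J' p'", OF A_prime[OF p] H.id_ext vb ubp 3] by blast
  define w where "w = compose J ub s"
  have w: "w \<in> J \<rightarrow>\<^sub>E J'" using s(1) ub unfolding w_def compose_def by auto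
  have wp'c: "ip_rx H w J J' p' \<in> ip_car H J" by (rule H.rx_car[OF w p'c])
  have sc: "ip_rx H s J L (ip_rx H ub L J' p') \<in> ip_car H J" by (rule H.rx_car[OF s(1) ubp])
  have 5: "ip_le H J p (ip_rx H w J J' p')"
  proof -
    have "ip_le H J p (ip_rx H s J L (ip_rx H ub L J' p'))"
      using H.trans[OF pc idc sc H.iso_le2[OF H.rx_id[OF pc]] 4] .
    thus ?thesis using H.trans[OF pc sc wp'c] H.iso_le2[OF H.rx_comp[OF ub s(1) p'c]]
      unfolding w_def by blast
  qed
  have uw: "compose J u' w = u"
  proof
    fix j show "compose J u' w j = u j"
    proof (cases "j \<in> J")
      case True
      then have "s j \<in> L" using s(1) by auto
      then show ?thesis using True pbeq[of "s j"] s(2) unfolding w_def compose_def by auto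
    next
      case False then show ?thesis using u unfolding compose_def by auto
    qed
  qed
  have wp': "ip_rx H w J J' p' \<in> A J" using A_rx w p' by blast
  have fpc: "f J p \<in> ip_car K J" by (rule fA_car[OF f p])
  have fp'c: "f J' p' \<in> ip_car K J'" by (rule fA_car[OF f p'])
  have fwc: "f J (ip_rx H w J J' p') \<in> ip_car K J" by (rule fA_car[OF f wp'])
  define E where "E = exK u' J' I (f J' p')"
  have Ec: "E \<in> ip_car K I" unfolding E_def by (rule K.ex_car[OF u' fp'c])
  have c1: "ip_rx K w J J' (f J' p') \<in> ip_car K J" by (rule K.rx_car[OF w fp'c])
  have c2: "ip_rx K u' J' I E \<in> ip_car K J'" by (rule K.rx_car[OF u' Ec])
  have c3: "ip_rx K w J J' (ip_rx K u' J' I E) \<in> ip_car K J" by (rule K.rx_car[OF w c2])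
  have c4: "ip_rx K u J I E \<in> ip_car K J" by (rule K.rx_car[OF u Ec])
  have 6: "ip_le K J (f J p) (f J (ip_rx H w J J' p'))" by (rule fA_mono[OF f p wp' 5])
  have 7: "ip_le K J (f J (ip_rx H w J J' p')) (ip_rx K w J J' (f J' p'))"
    by (rule K.iso_le1[OF fA_nat[OF f w p']])
  have 8: "ip_le K J' (f J' p') (ip_rx K u' J' I E)" unfolding E_def using K.unit u' fp'c by blast
  have 9: "ip_le K J (ip_rx K w J J' (f J' p')) (ip_rx K w J J' (ip_rx K u' J' I E))"
    using K.rx_mono[OF w fp'c c2 8] .
  have 10: "ip_le K J (ip_rx K w J J' (ip_rx K u' J' I E)) (ip_rx K u J I E)"
    using K.iso_le2[OF K.rx_comp[OF u' w Ec]] unfolding uw .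
  have "ip_le K J (f J p) (ip_rx K u J I E)"
    using K.trans[OF fpc fwc c1 6 7] K.trans[OF fpc c1 c3 _ 9] K.trans[OF fpc c3 c4 _ 10] by blast
  thus ?thesis unfolding E_def using K.adj[OF u fpc] Ec E_def by blast
qed


definition ch :: "'u set \<Rightarrow> 'p \<Rightarrow> 'u set \<times> ('u \<Rightarrow> 'u) \<times> 'p" where
  "ch I x = (SOME (J, u, p). u \<in> J \<rightarrow>\<^sub>E I \<and> p \<in> A J \<and> ip_iso H I x (exH u J I p))"

definition G :: "('u set \<Rightarrow> 'p \<Rightarrow> 'q) \<Rightarrow> 'u set \<Rightarrow> 'p \<Rightarrow> 'q" where
  "G f I x = (case ch I x of (J, u, p) \<Rightarrow> exK u J I (f J p))"

lemma ch:
  assumes x: "x \<in> ip_car H I"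
  obtains J u p where "ch I x = (J, u, p)" "u \<in> J \<rightarrow>\<^sub>E I" "p \<in> A J" "ip_iso H I x (exH u J I p)"
proof -
  have "\<exists>t. case t of (J, u, p) \<Rightarrow> u \<in> J \<rightarrow>\<^sub>E I \<and> p \<in> A J \<and> ip_iso H I x (exH u J I p)"
    using cov[OF x] by auto
  hence "case ch I x of (J, u, p) \<Rightarrow> u \<in> J \<rightarrow>\<^sub>E I \<and> p \<in> A J \<and> ip_iso H I x (exH u J I p)"
    unfolding ch_def by (rule someI_ex)
  thus ?thesis using that by (cases "ch I x") auto
qed

lemma G_eq: "ch I x = (J, u, p) \<Longrightarrow> G f I x = exK u J I (f J p)"
  unfolding G_def by simp

lemma G_car:
  assumes f: "ihom (H\<lparr>ip_car := A\<rparr>) K f" and x: "x \<in> ip_car H I"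
  shows "G f I x \<in> ip_car K I"
proof -
  obtain J u p where c: "ch I x = (J, u, p)" "u \<in> J \<rightarrow>\<^sub>E I" "p \<in> A J"
    "ip_iso H I x (exH u J I p)" by (rule ch[OF x])
  show ?thesis unfolding G_eq[OF c(1)] by (rule K.ex_car[OF c(2) fA_car[OF f c(3)]])
qed

lemma G_char:
  assumes f: "ihom (H\<lparr>ip_car := A\<rparr>) K f" and x: "x \<in> ip_car H I"
    and u: "u \<in> J \<rightarrow>\<^sub>E I" and p: "p \<in> A J" and xi: "ip_iso H I x (exH u J I p)"
  shows "ip_iso K I (G f I x) (exK u J I (f J p))"
proof -
  obtain J0 u0 p0 where c: "ch I x = (J0, u0, p0)" "u0 \<in> J0 \<rightarrow>\<^sub>E I" "p0 \<in> A J0"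
     "ip_iso H I x (exH u0 J0 I p0)" by (rule ch[OF x])
  have e0: "exH u0 J0 I p0 \<in> ip_car H I" by (rule H.ex_car[OF c(2) A_car[OF c(3)]])
  have e: "exH u J I p \<in> ip_car H I" by (rule H.ex_car[OF u A_car[OF p]])
  have l1: "ip_le H I (exH u0 J0 I p0) (exH u J I p)"
    using H.trans[OF e0 x e] c(4) xi unfolding ip_iso_def by blast
  have l2: "ip_le H I (exH u J I p) (exH u0 J0 I p0)"
    using H.trans[OF e x e0] c(4) xi unfolding ip_iso_def by blast
  show ?thesis unfolding G_eq[OF c(1)] ip_iso_def
    using KL[OF f c(2,3) u p l1] KL[OF f u p c(2,3) l2] by blast
qed

lemma G_exhom:
  assumes f: "ihom (H\<lparr>ip_car := A\<rparr>) K f"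
  shows "ex_hom H exH K exK (G f)"
proof -
  note fA = f[unfolded ihomA]
  have car: "\<forall>I. \<forall>x\<in>ip_car H I. G f I x \<in> ip_car K I" using G_car[OF f] by blast
  have mono: "\<forall>I. \<forall>x\<in>ip_car H I. \<forall>y\<in>ip_car H I. ip_le H I x y \<longrightarrow> ip_le K I (G f I x) (G f I y)"
  proof (intro allI ballI impI)
    fix I x y assume x: "x \<in> ip_car H I" and y: "y \<in> ip_car H I" and le: "ip_le H I x y"
    obtain J u p where c: "ch I x = (J, u, p)" "u \<in> J \<rightarrow>\<^sub>E I" "p \<in> A J"
      "ip_iso H I x (exH u J I p)" by (rule ch[OF x])
    obtain J' u' p' where c': "ch I y = (J', u', p')" "u' \<in> J' \<rightarrow>\<^sub>E I" "p' \<in> A J'"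
      "ip_iso H I y (exH u' J' I p')" by (rule ch[OF y])
    have e: "exH u J I p \<in> ip_car H I" by (rule H.ex_car[OF c(2) A_car[OF c(3)]])
    have e': "exH u' J' I p' \<in> ip_car H I" by (rule H.ex_car[OF c'(2) A_car[OF c'(3)]])
    have "ip_le H I (exH u J I p) y" using H.trans[OF e x y] c(4) le unfolding ip_iso_def by blast
    hence "ip_le H I (exH u J I p) (exH u' J' I p')"
      using H.trans[OF e y e'] c'(4) unfolding ip_iso_def by blast
    thus "ip_le K I (G f I x) (G f I y)" unfolding G_eq[OF c(1)] G_eq[OF c'(1)]
      using KL[OF f c(2,3) c'(2,3)] by blast
  qed
  have nat: "\<forall>I J2 w. w \<in> J2 \<rightarrow>\<^sub>E I \<longrightarrow> (\<forall>x\<in>ip_car H I.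
         ip_iso K J2 (G f J2 (ip_rx H w J2 I x)) (ip_rx K w J2 I (G f I x)))"
  proof (intro allI impI ballI)
    fix I J2 :: "'u set" and w x assume w: "w \<in> J2 \<rightarrow>\<^sub>E I" and x: "x \<in> ip_car H I"
    obtain J u p where c: "ch I x = (J, u, p)" "u \<in> J \<rightarrow>\<^sub>E I" "p \<in> A J"
      "ip_iso H I x (exH u J I p)" by (rule ch[OF x])
    obtain L ub vb where pb: "is_pullback I J2 J L w u ub vb" using pullback_exists[OF inf w c(2)] by blast
    have ub: "ub \<in> L \<rightarrow>\<^sub>E J" and vb: "vb \<in> L \<rightarrow>\<^sub>E J2" using pb unfolding is_pullback_def by auto
    have pc: "p \<in> ip_car H J" by (rule A_car[OF c(3)])
    have e: "exH u J I p \<in> ip_car H I" by (rule H.ex_car[OF c(2) pc])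
    have ubp: "ip_rx H ub L J p \<in> A L" using A_rx ub c(3) by blast
    have ubpc: "ip_rx H ub L J p \<in> ip_car H L" using ubp A_car by blast
    have rxx: "ip_rx H w J2 I x \<in> ip_car H J2" by (rule H.rx_car[OF w x])
    have i1: "ip_iso H J2 (ip_rx H w J2 I x) (exH vb L J2 (ip_rx H ub L J p))"
      using H.iso_trans[OF rxx H.rx_car[OF w e] H.ex_car[OF vb ubpc] H.rx_iso[OF w x e c(4)] H.BC[OF pb pc]] .
    have g1: "ip_iso K J2 (G f J2 (ip_rx H w J2 I x)) (exK vb L J2 (f L (ip_rx H ub L J p)))"
      using G_char[OF f rxx vb ubp i1] .
    have fpc: "f J p \<in> ip_car K J" by (rule fA_car[OF f c(3)])
    have fubc: "f L (ip_rx H ub L J p) \<in> ip_car K L" by (rule fA_car[OF f ubp])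
    have rfc: "ip_rx K ub L J (f J p) \<in> ip_car K L" by (rule K.rx_car[OF ub fpc])
    have g2: "ip_iso K J2 (exK vb L J2 (f L (ip_rx H ub L J p))) (exK vb L J2 (ip_rx K ub L J (f J p)))"
      by (rule K.ex_iso[OF vb fubc rfc fA_nat[OF f ub c(3)]])
    have g3: "ip_iso K J2 (exK vb L J2 (ip_rx K ub L J (f J p))) (ip_rx K w J2 I (exK u J I (f J p)))"
      using K.iso_sym[OF K.BC[OF pb fpc]] .
    show "ip_iso K J2 (G f J2 (ip_rx H w J2 I x)) (ip_rx K w J2 I (G f I x))"
      unfolding G_eq[OF c(1)]
      using K.iso_trans[OF G_car[OF f rxx] K.ex_car[OF vb fubc] K.ex_car[OF vb rfc] g1 g2]
        K.iso_trans[OF G_car[OF f rxx] K.ex_car[OF vb rfc] K.rx_car[OF w K.ex_car[OF c(2) fpc]] _ g3]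
      by blast
  qed
  have exq: "\<forall>I J2 w. w \<in> J2 \<rightarrow>\<^sub>E I \<longrightarrow> (\<forall>x\<in>ip_car H J2.
         ip_iso K I (G f I (exH w J2 I x)) (exK w J2 I (G f J2 x)))"
  proof (intro allI impI ballI)
    fix I J2 :: "'u set" and w x assume w: "w \<in> J2 \<rightarrow>\<^sub>E I" and x: "x \<in> ip_car H J2"
    obtain J u p where c: "ch J2 x = (J, u, p)" "u \<in> J \<rightarrow>\<^sub>E J2" "p \<in> A J"
      "ip_iso H J2 x (exH u J J2 p)" by (rule ch[OF x])
    have pc: "p \<in> ip_car H J" by (rule A_car[OF c(3)])
    have wu: "compose J w u \<in> J \<rightarrow>\<^sub>E I" using w c(2) by (auto simp: compose_def)
    have e: "exH u J J2 p \<in> ip_car H J2" by (rule H.ex_car[OF c(2) pc])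
    have ewx: "exH w J2 I x \<in> ip_car H I" by (rule H.ex_car[OF w x])
    have i1: "ip_iso H I (exH w J2 I x) (exH (compose J w u) J I p)"
      using H.iso_trans[OF ewx H.ex_car[OF w e] H.ex_car[OF wu pc] H.ex_iso[OF w x e c(4)]
          H.iso_sym[OF H.ex_comp[OF w c(2) pc]]] .
    have g1: "ip_iso K I (G f I (exH w J2 I x)) (exK (compose J w u) J I (f J p))"
      using G_char[OF f ewx wu c(3) i1] .
    have fpc: "f J p \<in> ip_car K J" by (rule fA_car[OF f c(3)])
    show "ip_iso K I (G f I (exH w J2 I x)) (exK w J2 I (G f J2 x))"
      unfolding G_eq[OF c(1)]
      using K.iso_trans[OF G_car[OF f ewx] K.ex_car[OF wu fpc] K.ex_car[OF w K.ex_car[OF c(2) fpc]]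
          g1 K.ex_comp[OF w c(2) fpc]] .
  qed
  show ?thesis unfolding ex_hom_def ihom_def
    apply (intro conjI)
       apply (rule car)
      apply (rule mono)
     apply (rule nat)
    by (rule exq)
qed


lemma completion: "ex_completion_wrt H exH A K exK"
proof -
  have exh_ihom: "ihom (H\<lparr>ip_car := A\<rparr>) K g" if "ex_hom H exH K exK g" for g
    unfolding ihomA
  proof (intro conjI allI ballI impI)
    have gH: "ihom H K g" by (rule ex_hom_ihom[OF that])
    show "g I x \<in> ip_car K I" if "x \<in> A I" for I x by (rule ihom_car[OF gH A_car[OF that]])
    show "ip_le K I (g I x) (g I y)" if "x \<in> A I" "y \<in> A I" "ip_le H I x y" for I x y
      by (rule ihom_mono[OF gH A_car[OF that(1)] A_car[OF that(2)] that(3)])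
    show "ip_iso K J (g J (ip_rx H u J I x)) (ip_rx K u J I (g I x))" if "u \<in> J \<rightarrow>\<^sub>E I" "x \<in> A I" for I J u x
      by (rule ihom_nat[OF gH that(1) A_car[OF that(2)]])
  qed
  have homle: "hom_le (H\<lparr>ip_car := A\<rparr>) K g g'" if "hom_le H K g g'" for g g'
    using that A_car unfolding hom_le_def by simp
  have Gmono: "hom_le H K (G f) (G f')" if f: "ihom (H\<lparr>ip_car := A\<rparr>) K f"
    and f': "ihom (H\<lparr>ip_car := A\<rparr>) K f'" and le: "hom_le (H\<lparr>ip_car := A\<rparr>) K f f'" for f f'
    unfolding hom_le_def
  proof (intro allI ballI)
    fix I x assume x: "x \<in> ip_car H I"
    obtain J u p where c: "ch I x = (J, u, p)" "u \<in> J \<rightarrow>\<^sub>E I" "p \<in> A J"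
      "ip_iso H I x (exH u J I p)" by (rule ch[OF x])
    have "ip_le K J (f J p) (f' J p)" using le c(3) unfolding hom_le_def by simp
    moreover have "f J p \<in> ip_car K J" "f' J p \<in> ip_car K J" by (rule fA_car[OF f c(3)], rule fA_car[OF f' c(3)])
    ultimately show "ip_le K I (G f I x) (G f' I x)" unfolding G_eq[OF c(1)]
      using K.ex_mono c(2) by blast
  qed
  have GF: "hom_le H K (G g) g \<and> hom_le H K g (G g)" if g: "ex_hom H exH K exK g" for g
  proof -
    have gi: "ihom (H\<lparr>ip_car := A\<rparr>) K g" using exh_ihom g .
    have gH: "ihom H K g" by (rule ex_hom_ihom[OF g])
    have "ip_iso K I (G g I x) (g I x)" if x: "x \<in> ip_car H I" for I x
    proof -
      obtain J u p where c: "ch I x = (J, u, p)" "u \<in> J \<rightarrow>\<^sub>E I" "p \<in> A J"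
        "ip_iso H I x (exH u J I p)" by (rule ch[OF x])
      have pc: "p \<in> ip_car H J" by (rule A_car[OF c(3)])
      have e: "exH u J I p \<in> ip_car H I" by (rule H.ex_car[OF c(2) pc])
      have gpc: "g J p \<in> ip_car K J" by (rule ihom_car[OF gH pc])
      have i1: "ip_iso K I (exK u J I (g J p)) (g I (exH u J I p))"
        by (rule K.iso_sym[OF ex_hom_ex[OF g c(2) pc]])
      have i2: "ip_iso K I (g I (exH u J I p)) (g I x)"
        using ihom_mono[OF gH e x] ihom_mono[OF gH x e] c(4) unfolding ip_iso_def by blast
      show ?thesis unfolding G_eq[OF c(1)]
        by (rule K.iso_trans[OF K.ex_car[OF c(2) gpc] ihom_car[OF gH e] ihom_car[OF gH x] i1 i2])
    qed
    thus ?thesis unfolding hom_le_def ip_iso_def by blast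
  qed
  have FG: "hom_le (H\<lparr>ip_car := A\<rparr>) K (G f) f \<and> hom_le (H\<lparr>ip_car := A\<rparr>) K f (G f)"
    if f: "ihom (H\<lparr>ip_car := A\<rparr>) K f" for f
  proof -
    have "ip_iso K I (G f I p) (f I p)" if p: "p \<in> A I" for I p
    proof -
      have pc: "p \<in> ip_car H I" using p A_car by blast
      have fpc: "f I p \<in> ip_car K I" by (rule fA_car[OF f p])
      have i1: "ip_iso K I (G f I p) (exK (\<lambda>i\<in>I. i) I I (f I p))"
        using G_char[OF f pc H.id_ext p H.iso_sym[OF H.ex_id[OF pc]]] .
      show ?thesis using K.iso_trans[OF G_car[OF f pc] K.ex_car[OF H.id_ext fpc] fpc i1 K.ex_id[OF fpc]] .
    qed
    thus ?thesis unfolding hom_le_def ip_iso_def by simp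
  qed
  show ?thesis unfolding ex_completion_wrt_def preorder_equiv_def
    apply (intro conjI)
      apply (simp add: exh_ihom)
     apply (simp add: homle)
    apply (rule exI[of _ G])
    using G_exhom Gmono GF FG by simp
qed

lemma prim_iso:
  assumes p: "p \<in> prim H exH I"
  shows "\<exists>a\<in>A I. ip_iso H I p a"
proof -
  have pp: "ex_prime H exH I p" using p unfolding prim_def by simp
  have pc: "p \<in> ip_car H I" by (rule ex_prime_car[OF pp])
  obtain J u a where u: "u \<in> J \<rightarrow>\<^sub>E I" and a: "a \<in> A J" and i: "ip_iso H I p (exH u J I a)"
    using cov[OF pc] by blast
  have ac: "a \<in> ip_car H J" using a A_car by blast
  have e: "exH u J I a \<in> ip_car H I" by (rule H.ex_car[OF u ac])
  have idc: "ip_rx H (\<lambda>i\<in>I. i) I I p \<in> ip_car H I" using H.rx_car[OF H.id_ext pc] .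
  have "ip_le H I (ip_rx H (\<lambda>i\<in>I. i) I I p) (exH u J I a)"
    using H.trans[OF idc pc e] H.rx_id[OF pc] i unfolding ip_iso_def by blast
  then have "\<exists>s \<in> I \<rightarrow>\<^sub>E J. (\<forall>j\<in>I. u (s j) = j) \<and> ip_le H I (ip_rx H (\<lambda>i\<in>I. i) I I p) (ip_rx H s I J a)"
    by (rule ex_primeD[where u="\<lambda>i\<in>I. i" and J=I and v=u and K=J and x=a, OF pp H.id_ext u ac])
  then obtain s where s: "s \<in> I \<rightarrow>\<^sub>E J" "\<forall>j\<in>I. u (s j) = j"
    and le: "ip_le H I (ip_rx H (\<lambda>i\<in>I. i) I I p) (ip_rx H s I J a)"
    by blast
  have sa: "ip_rx H s I J a \<in> A I" using A_rx s(1) a by blast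
  have sac: "ip_rx H s I J a \<in> ip_car H I" using sa A_car by blast
  have l1: "ip_le H I p (ip_rx H s I J a)"
    using H.trans[OF pc idc sac _ le] H.rx_id[OF pc] unfolding ip_iso_def by blast
  have us: "compose I u s = (\<lambda>i\<in>I. i)"
    using s(2) by (auto simp: compose_def)
  have c2: "ip_rx H u J I (exH u J I a) \<in> ip_car H J" by (rule H.rx_car[OF u e])
  have c3: "ip_rx H s I J (ip_rx H u J I (exH u J I a)) \<in> ip_car H I" by (rule H.rx_car[OF s(1) c2])
  have c4: "ip_rx H (\<lambda>i\<in>I. i) I I (exH u J I a) \<in> ip_car H I" using H.rx_car[OF H.id_ext e] .
  have m1: "ip_le H I (ip_rx H s I J a) (ip_rx H s I J (ip_rx H u J I (exH u J I a)))"
    using H.rx_mono[OF s(1) ac c2 H.unit[OF u ac]] .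
  have m2: "ip_le H I (ip_rx H s I J (ip_rx H u J I (exH u J I a))) (ip_rx H (\<lambda>i\<in>I. i) I I (exH u J I a))"
    using H.iso_le2[OF H.rx_comp[OF u s(1) e]] unfolding us .
  have m3: "ip_le H I (ip_rx H (\<lambda>i\<in>I. i) I I (exH u J I a)) p"
    using H.trans[OF c4 e pc] H.rx_id[OF e] i unfolding ip_iso_def by blast
  have l2: "ip_le H I (ip_rx H s I J a) p"
    using H.trans[OF sac c3 c4 m1 m2] H.trans[OF sac c4 pc _ m3] by blast
  show ?thesis using sa l1 l2 unfolding ip_iso_def by blast
qed

end

lemma prim_sub:
  assumes "ipx H ex"
  shows "sub_preorder H (prim H ex)"
proof -
  interpret H: ipx H ex by fact
  have "ip_rx H w J2 I p \<in> prim H ex J2" if w: "w \<in> J2 \<rightarrow>\<^sub>E I" and p: "p \<in> prim H ex I" for I J2 w p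
  proof -
    have pp: "ex_prime H ex I p" using p unfolding prim_def by simp
    have pc: "p \<in> ip_car H I" by (rule ex_prime_car[OF pp])
    have key: "\<exists>s \<in> J \<rightarrow>\<^sub>E K. (\<forall>j\<in>J. v (s j) = j) \<and>
            ip_le H J (ip_rx H u J J2 (ip_rx H w J2 I p)) (ip_rx H s J K x)"
      if u: "u \<in> J \<rightarrow>\<^sub>E J2" and v: "v \<in> K \<rightarrow>\<^sub>E J" and x: "x \<in> ip_car H K"
        and le: "ip_le H J (ip_rx H u J J2 (ip_rx H w J2 I p)) (ex v K J x)" for J K u v x
    proof -
      have wu: "compose J w u \<in> J \<rightarrow>\<^sub>E I" using w u by (auto simp: compose_def)
      have c1: "ip_rx H (compose J w u) J I p \<in> ip_car H J" by (rule H.rx_car[OF wu pc])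
      have c2: "ip_rx H u J J2 (ip_rx H w J2 I p) \<in> ip_car H J" by (rule H.rx_car[OF u H.rx_car[OF w pc]])
      have c3: "ex v K J x \<in> ip_car H J" by (rule H.ex_car[OF v x])
      have "ip_le H J (ip_rx H (compose J w u) J I p) (ex v K J x)"
        using H.trans[OF c1 c2 c3 _ le] H.rx_comp[OF w u pc] unfolding ip_iso_def by blast
      then have "\<exists>s \<in> J \<rightarrow>\<^sub>E K. (\<forall>j\<in>J. v (s j) = j) \<and> ip_le H J (ip_rx H (compose J w u) J I p) (ip_rx H s J K x)"
        by (rule ex_primeD[where u="compose J w u" and J=J and v=v and K=K and x=x, OF pp wu v x])
      then obtain s where s: "s \<in> J \<rightarrow>\<^sub>E K" "\<forall>j\<in>J. v (s j) = j"
        and l: "ip_le H J (ip_rx H (compose J w u) J I p) (ip_rx H s J K x)"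
        by blast
      have c4: "ip_rx H s J K x \<in> ip_car H J" by (rule H.rx_car[OF s(1) x])
      have "ip_le H J (ip_rx H u J J2 (ip_rx H w J2 I p)) (ip_rx H s J K x)"
        using H.trans[OF c2 c1 c4 _ l] H.rx_comp[OF w u pc] unfolding ip_iso_def by blast
      thus ?thesis using s by blast
    qed
    have wpc: "ip_rx H w J2 I p \<in> ip_car H J2" by (rule H.rx_car[OF w pc])
    show ?thesis unfolding prim_def ex_prime_def mem_Collect_eq
      apply (rule conjI[OF wpc])
      apply (intro allI impI)
      apply (rule key)
         apply assumption+
      done
  qed
  moreover have "prim H ex I \<subseteq> ip_car H I" for I
    unfolding prim_def by (rule subsetI, rule ex_prime_car, simp)
  ultimately show ?thesis unfolding sub_preorder_def by blast
qed

theorem proposition4p3: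
  fixes H :: "('u, 'p) ipre"
    and exH :: "('u \<Rightarrow> 'u) \<Rightarrow> 'u set \<Rightarrow> 'u set \<Rightarrow> 'p \<Rightarrow> 'p"
  assumes "infinite (UNIV :: 'u set)"
    and "indexed_preorder H"
    and "has_exists H exH"
  shows "(\<forall>A. sub_preorder H A \<and> (\<forall>I. A I \<subseteq> prim H exH I) \<and>
              (\<forall>I. \<forall>x\<in>ip_car H I. \<exists>J u p. u \<in> J \<rightarrow>\<^sub>E I \<and> p \<in> A J \<and> ip_iso H I x (exH u J I p))
           \<longrightarrow> (\<forall>(K :: ('u, 'q) ipre) exK. indexed_preorder K \<and> has_exists K exK
                   \<longrightarrow> ex_completion_wrt H exH A K exK) \<and>
               (\<forall>I. \<forall>p\<in>prim H exH I. \<exists>a\<in>A I. ip_iso H I p a)) \<and>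
         (enough_primes H exH \<longrightarrow>
            (\<forall>(K :: ('u, 'q) ipre) exK. indexed_preorder K \<and> has_exists K exK
                   \<longrightarrow> ex_completion_wrt H exH (prim H exH) K exK))"
proof -
  have iH: "ipx H exH" using assms(2,3) by (simp add: ipx_def)
  have main: "(\<forall>(K :: ('u, 'q) ipre) exK. indexed_preorder K \<and> has_exists K exK
                   \<longrightarrow> ex_completion_wrt H exH A K exK) \<and>
               (\<forall>I. \<forall>p\<in>prim H exH I. \<exists>a\<in>A I. ip_iso H I p a)"
    if A: "sub_preorder H A" "\<forall>I. A I \<subseteq> prim H exH I"
      "\<forall>I. \<forall>x\<in>ip_car H I. \<exists>J u p. u \<in> J \<rightarrow>\<^sub>E I \<and> p \<in> A J \<and> ip_iso H I x (exH u J I p)" for A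
  proof (intro conjI allI impI ballI)
    fix K :: "('u, 'q) ipre" and exK
    assume "indexed_preorder K \<and> has_exists K exK"
    then interpret comp H exH K exK A
      using iH A assms(1) by (simp add: comp_def comp_axioms_def ipx_def)
    show "ex_completion_wrt H exH A K exK" by (rule completion)
  next
    fix I p assume p: "p \<in> prim H exH I"
    interpret comp H exH H exH A
      using iH A assms(1) by (simp add: comp_def comp_axioms_def ipx_def)
    show "\<exists>a\<in>A I. ip_iso H I p a" by (rule prim_iso[OF p])
  qed
  show ?thesis
  proof (rule conjI; (intro allI impI))
    fix A assume "sub_preorder H A \<and> (\<forall>I. A I \<subseteq> prim H exH I) \<and>
              (\<forall>I. \<forall>x\<in>ip_car H I. \<exists>J u p. u \<in> J \<rightarrow>\<^sub>E I \<and> p \<in> A J \<and> ip_iso H I x (exH u J I p))"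
    thus "(\<forall>(K :: ('u, 'q) ipre) exK. indexed_preorder K \<and> has_exists K exK
                   \<longrightarrow> ex_completion_wrt H exH A K exK) \<and>
               (\<forall>I. \<forall>p\<in>prim H exH I. \<exists>a\<in>A I. ip_iso H I p a)" using main by blast
  next
    fix K :: "('u, 'q) ipre" and exK
    assume ep: "enough_primes H exH" and K: "indexed_preorder K \<and> has_exists K exK"
    have s1: "sub_preorder H (prim H exH)" using prim_sub[OF iH] .
    have s2: "\<forall>I. prim H exH I \<subseteq> prim H exH I" by simp
    have s3: "\<forall>I. \<forall>x\<in>ip_car H I. \<exists>J u p. u \<in> J \<rightarrow>\<^sub>E I \<and> p \<in> prim H exH J \<and> ip_iso H I x (exH u J I p)"
      using ep unfolding enough_primes_def prim_def mem_Collect_eq by assumption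
    have "\<forall>(K :: ('u, 'q) ipre) exK. indexed_preorder K \<and> has_exists K exK
                   \<longrightarrow> ex_completion_wrt H exH (prim H exH) K exK"
      using main[OF s1 s2 s3] by (rule conjunct1)
    then show "ex_completion_wrt H exH (prim H exH) K exK" using K by blast
  qed
qed

end
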